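(* Let $V$ and $W$ be real inner product spaces of dimension $2$ and $3$ respectively, let $A:[0,1]\to\mathrm{Hom}(W,W)$ be a smooth path of positive self-adjoint operators and let $T:[0,1]\to\mathrm{Hom}(V,W)$ be a smooth path with $\ddot T(s)=A(s)\circ T(s)$. Then $u(s):=\|T(s)\|_1$ is convex on $[0,1]$. Moreover, if $T(s)$ has rank $2$ and $A(s)\circ T(s)\neq0$, then $\ddot u(s)>0$.
   Context: For $L\in\mathrm{Hom}(V,W)$, $\|L\|_1=\operatorname{tr}\sqrt{L^TL}$ ($1$-Schatten norm), with $L^T$ the adjoint. *)

theory Defs
  imports "HOL-Analysis.Analysis"
begin

text \<open>V = real^2, W = real^3 with standard inner products; Hom(V,W) = real^2^3 matrices
  (acting by *v), adjoint = transpose.\<close>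

definition psd_matrix :: "real^'n^'n \<Rightarrow> bool" where
  "psd_matrix S \<longleftrightarrow> transpose S = S \<and> (\<forall>x. 0 \<le> x \<bullet> (S *v x))"

definition matrix_sqrt :: "real^'n^'n \<Rightarrow> real^'n^'n" where
  "matrix_sqrt M = (THE S. psd_matrix S \<and> S ** S = M)"

definition schatten1 :: "real^'n^'m \<Rightarrow> real" where
  "schatten1 L = trace (matrix_sqrt (transpose L ** L))"

text \<open>D is a sequence of all derivatives of f on [0,1] (one-sided at endpoints): f is smooth on [0,1].\<close>
definition smooth_derivs :: "(real \<Rightarrow> 'a::real_normed_vector) \<Rightarrow> (nat \<Rightarrow> real \<Rightarrow> 'a) \<Rightarrow> bool" where
  "smooth_derivs f D \<longleftrightarrow> (\<forall>t\<in>{0..1}. D 0 t = f t) \<and>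
     (\<forall>n. \<forall>t\<in>{0..1}. (D n has_vector_derivative D (Suc n) t) (at t within {0..1}))"

end

theory Submission
  imports Defs
begin

lemma quad_disc:
  fixes p q r :: real
  assumes "\<And>l. 0 \<le> p + 2*l*q + l^2*r" and "0 \<le> r"
  shows "q^2 \<le> p*r"
proof (cases "r = 0")
  case True
  show ?thesis
  proof (rule ccontr)
    assume "\<not> ?thesis"
    then have "q \<noteq> 0" using True by simp
    have "0 \<le> p + 2*(-(p+1)/(2*q))*q + (-(p+1)/(2*q))^2*r" by (rule assms(1))
    also have "\<dots> = -1" using True \<open>q\<noteq>0\<close> by (simp add: field_simps)
    finally show False by simp
  qed
next
  case False
  then have rp: "r > 0" using assms(2) by simp
  have "0 \<le> p + 2*(-q/r)*q + (-q/r)^2*r" by (rule assms(1))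
  also have "\<dots> = (p*r - q^2)/r" using rp by (simp add: field_simps power2_eq_square)
  finally show ?thesis using rp by (simp add: divide_nonneg_pos zero_le_divide_iff)
qed

lemma sym_dot:
  fixes S :: "real^'n^'n"
  assumes "transpose S = S"
  shows "x \<bullet> (S *v y) = y \<bullet> (S *v x)"
proof -
  have e: "S $ i $ j = S $ j $ i" for i j
    using arg_cong[OF assms, of "\<lambda>M. M$j$i"] by (simp add: transpose_def)
  have "x \<bullet> (S *v y) = (\<Sum>i\<in>UNIV. \<Sum>j\<in>UNIV. x$i * S$i$j * y$j)"
    by (simp add: inner_vec_def matrix_vector_mult_def sum_distrib_left mult.assoc)
  also have "\<dots> = (\<Sum>j\<in>UNIV. \<Sum>i\<in>UNIV. x$i * S$i$j * y$j)" by (rule sum.swap)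
  also have "\<dots> = y \<bullet> (S *v x)"
    by (simp add: inner_vec_def matrix_vector_mult_def sum_distrib_left e mult.commute mult.left_commute)
  finally show ?thesis .
qed

lemma psd_cs:
  fixes S :: "real^'n^'n"
  assumes "psd_matrix S"
  shows "(x \<bullet> (S *v y))^2 \<le> (x \<bullet> (S *v x)) * (y \<bullet> (S *v y))"
proof -
  have sym: "transpose S = S" and nn: "\<And>z. 0 \<le> z \<bullet> (S *v z)" using assms by (auto simp: psd_matrix_def)
  have "0 \<le> x \<bullet> (S *v x) + 2*l*(x \<bullet> (S *v y)) + l^2*(y \<bullet> (S *v y))" for l
  proof -
    have "0 \<le> (x + l *\<^sub>R y) \<bullet> (S *v (x + l *\<^sub>R y))" by (rule nn)
    also have "\<dots> = x \<bullet> (S *v x) + l*(x \<bullet> (S *v y)) + l*(y \<bullet> (S *v x)) + l^2*(y \<bullet> (S *v y))"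
      by (simp add: matrix_vector_right_distrib matrix_vector_mult_scaleR inner_add_left inner_add_right power2_eq_square algebra_simps)
    also have "\<dots> = x \<bullet> (S *v x) + 2*l*(x \<bullet> (S *v y)) + l^2*(y \<bullet> (S *v y))"
      using sym_dot[OF sym, of y x] by simp
    finally show ?thesis .
  qed
  then show ?thesis using quad_disc nn by blast
qed

lemma psd_zero:
  fixes S :: "real^'n^'n"
  assumes "psd_matrix S" "x \<bullet> (S *v x) = 0"
  shows "S *v x = 0"
proof -
  have "((S *v x) \<bullet> (S *v x))^2 \<le> 0"
    using psd_cs[OF assms(1), of "S *v x" x] assms(2) by (simp add: sym_dot)
  then show ?thesis by simp
qed

lemma psd2_entries:
  fixes S :: "real^2^2"
  assumes "psd_matrix S"
  shows "S$1$2 = S$2$1" "0 \<le> S$1$1" "0 \<le> S$2$2" "(S$1$2)^2 \<le> S$1$1 * S$2$2"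
proof -
  have sym: "transpose S = S" using assms by (simp add: psd_matrix_def)
  show "S$1$2 = S$2$1" using arg_cong[OF sym, of "\<lambda>M. M$1$2"] by (simp add: transpose_def)
  have nn: "\<And>z. 0 \<le> z \<bullet> (S *v z)" using assms by (auto simp: psd_matrix_def)
  have e1: "axis i 1 \<bullet> (S *v axis j 1) = S$i$j" for i j :: 2
    by (simp add: inner_axis' matrix_vector_mult_basis column_def)
  show "0 \<le> S$1$1" using nn[of "axis 1 1"] e1[of 1 1] by simp
  show "0 \<le> S$2$2" using nn[of "axis 2 1"] e1[of 2 2] by simp
  show "(S$1$2)^2 \<le> S$1$1 * S$2$2" using psd_cs[OF assms, of "axis 1 1" "axis 2 1"] e1 by simp
qed

lemma quad_form_nonneg:
  fixes a b c x y :: real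
  assumes "0 \<le> a" "0 \<le> c" "b^2 \<le> a*c"
  shows "0 \<le> a*x^2 + 2*b*x*y + c*y^2"
proof (cases "a = 0")
  case True
  then have "b = 0" using assms by simp
  then show ?thesis using True assms by simp
next
  case False
  then have ap: "a > 0" using assms by simp
  have "a*(a*x^2 + 2*b*x*y + c*y^2) = (a*x+b*y)^2 + (a*c-b^2)*y^2"
    by (simp add: algebra_simps power2_eq_square)
  also have "\<dots> \<ge> 0" using assms by simp
  finally show ?thesis using ap by (simp add: zero_le_mult_iff)
qed

lemma psd2_intro:
  fixes S :: "real^2^2"
  assumes "S$1$2 = S$2$1" "0 \<le> S$1$1" "0 \<le> S$2$2" "(S$1$2)^2 \<le> S$1$1 * S$2$2"
  shows "psd_matrix S"
  unfolding psd_matrix_def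
proof
  show "transpose S = S" using assms(1)
    by (simp add: vec_eq_iff forall_2 transpose_def)
  show "\<forall>x. 0 \<le> x \<bullet> (S *v x)"
  proof
    fix x :: "real^2"
    have "x \<bullet> (S *v x) = S$1$1*(x$1)^2 + 2*(S$1$2)*(x$1)*(x$2) + S$2$2*(x$2)^2"
      using assms(1) by (simp add: inner_vec_def matrix_vector_mult_def sum_2 algebra_simps power2_eq_square)
    also have "\<dots> \<ge> 0" by (rule quad_form_nonneg[OF assms(2,3,4)])
    finally show "0 \<le> x \<bullet> (S *v x)" .
  qed
qed

lemma sqrt2_props:
  fixes S M :: "real^2^2"
  assumes "psd_matrix S" "S ** S = M"
  shows "trace S = sqrt (M$1$1 + M$2$2 + 2* sqrt(M$1$1*M$2$2 - (M$1$2)^2))"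
    and "trace S *\<^sub>R S = M + sqrt(M$1$1*M$2$2 - (M$1$2)^2) *\<^sub>R mat 1"
proof -
  note e = psd2_entries[OF assms(1)]
  define p q r where "p = S$1$1" "q = S$1$2" "r = S$2$2"
  have s21: "S$2$1 = q" using e(1) p_q_r_def by simp
  have M11: "M$1$1 = p^2 + q^2" and M12: "M$1$2 = q*(p+r)" and M21: "M$2$1 = q*(p+r)" and M22: "M$2$2 = q^2+r^2"
    using assms(2)[symmetric] s21 by (simp_all add: matrix_matrix_mult_def sum_2 p_q_r_def power2_eq_square algebra_simps)
  have pqr: "0 \<le> p" "0 \<le> r" "q^2 \<le> p*r" using e p_q_r_def by auto
  have "M$1$1*M$2$2 - (M$1$2)^2 = (p*r - q^2)^2"
    unfolding M11 M12 M22 by (simp add: algebra_simps power2_eq_square)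
  then have d: "sqrt(M$1$1*M$2$2 - (M$1$2)^2) = p*r - q^2" using pqr by simp
  have "M$1$1 + M$2$2 + 2*(p*r - q^2) = (p+r)^2"
    unfolding M11 M22 by (simp add: algebra_simps power2_eq_square)
  then have t: "sqrt (M$1$1 + M$2$2 + 2* sqrt(M$1$1*M$2$2 - (M$1$2)^2)) = p + r"
    using d pqr by simp
  have tr: "trace S = p + r" by (simp add: trace_def sum_2 p_q_r_def)
  show "trace S = sqrt (M$1$1 + M$2$2 + 2* sqrt(M$1$1*M$2$2 - (M$1$2)^2))" using t tr by simp
  show "trace S *\<^sub>R S = M + sqrt(M$1$1*M$2$2 - (M$1$2)^2) *\<^sub>R mat 1"
    unfolding tr d using M11 M12 M21 M22 s21
    by (simp add: vec_eq_iff forall_2 mat_def p_q_r_def algebra_simps power2_eq_square)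
qed

lemma sqrt2_unique:
  fixes S S' M :: "real^2^2"
  assumes "psd_matrix S" "S ** S = M" "psd_matrix S'" "S' ** S' = M"
  shows "S = S'"
proof (cases "trace S = 0")
  case True
  have z: "X = 0" if "psd_matrix X" "trace X = 0" for X :: "real^2^2"
  proof -
    note e = psd2_entries[OF that(1)]
    have "X$1$1 = 0" "X$2$2 = 0" using e that(2) by (auto simp: trace_def sum_2)
    then have "X$1$2 = 0" using e by simp
    then show ?thesis using e \<open>X$1$1 = 0\<close> \<open>X$2$2 = 0\<close> by (simp add: vec_eq_iff forall_2)
  qed
  have "trace S' = 0" using True sqrt2_props(1)[OF assms(1,2)] sqrt2_props(1)[OF assms(3,4)] by simp
  then show ?thesis using z assms True by metis
next
  case False
  have "trace S *\<^sub>R S = trace S' *\<^sub>R S'" using sqrt2_props(2)[OF assms(1,2)] sqrt2_props(2)[OF assms(3,4)] by simp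
  moreover have "trace S = trace S'" using sqrt2_props(1)[OF assms(1,2)] sqrt2_props(1)[OF assms(3,4)] by simp
  ultimately show ?thesis using False by simp
qed

lemma sqrt2_exists:
  fixes M :: "real^2^2"
  assumes "M$1$2 = M$2$1" "0 \<le> M$1$1" "0 \<le> M$2$2" "(M$1$2)^2 \<le> M$1$1 * M$2$2"
  shows "\<exists>S. psd_matrix S \<and> S ** S = M"
proof -
  define d where "d = sqrt(M$1$1*M$2$2 - (M$1$2)^2)"
  define t where "t = sqrt (M$1$1 + M$2$2 + 2*d)"
  have d0: "0 \<le> d" and dd: "d^2 = M$1$1*M$2$2 - (M$1$2)^2" using assms(4) by (auto simp: d_def)
  have t0: "0 \<le> t" and tt: "t^2 = M$1$1 + M$2$2 + 2*d" using assms d0 by (auto simp: t_def)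
  show ?thesis
  proof (cases "t = 0")
    case True
    then have "M$1$1 = 0" "M$2$2 = 0" using tt assms d0 by auto
    then have "M$1$2 = 0" using assms by simp
    then have "M = 0" using \<open>M$1$1 = 0\<close> \<open>M$2$2 = 0\<close> assms(1) by (simp add: vec_eq_iff forall_2)
    then show ?thesis by (intro exI[of _ 0]) (simp add: psd_matrix_def transpose_def vec_eq_iff)
  next
    case False
    then have tp: "t > 0" using t0 by simp
    define S where "S = (1/t) *\<^sub>R (M + d *\<^sub>R mat 1)"
    have S11: "S$1$1 = (M$1$1 + d)/t" and S12: "S$1$2 = M$1$2/t" and S21: "S$2$1 = M$2$1/t"
      and S22: "S$2$2 = (M$2$2 + d)/t" by (simp_all add: S_def mat_def)
    have "psd_matrix S"
    proof (rule psd2_intro)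
      show "S$1$2 = S$2$1" using S12 S21 assms(1) by simp
      show "0 \<le> S$1$1" "0 \<le> S$2$2" using S11 S22 assms d0 tp by auto
      have "0 \<le> d*d + d*M$1$1 + d*M$2$2" using assms d0 by simp
      then have "(M$1$2)^2 \<le> (M$1$1 + d)*(M$2$2 + d)" using assms(4) by (simp add: algebra_simps)
      then show "(S$1$2)^2 \<le> S$1$1 * S$2$2" using S11 S12 S22 tp
        by (simp add: power_divide divide_right_mono power2_eq_square[of t])
    qed
    moreover have "S ** S = M"
    proof -
      have a: "(M$1$1 + d)^2 + (M$1$2)^2 = M$1$1 * t^2" using dd tt assms(1)
        by (simp add: algebra_simps power2_eq_square)
      have b: "(M$2$2 + d)^2 + (M$1$2)^2 = M$2$2 * t^2" using dd tt assms(1)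
        by (simp add: algebra_simps power2_eq_square)
      have c: "(M$1$1 + d)*M$1$2 + M$1$2*(M$2$2+d) = M$1$2 * t^2" using tt
        by (simp add: algebra_simps power2_eq_square)
      have t2: "t^2 \<noteq> 0" using tp by simp
      show ?thesis
        apply (simp add: vec_eq_iff forall_2 matrix_matrix_mult_def sum_2 S11 S12 S21 S22 assms(1)[symmetric])
        apply (simp add: divide_simps t2 flip: power2_eq_square a b c)
        using a b c tp by (simp add: algebra_simps power2_eq_square)
        
    qed
    ultimately show ?thesis by blast
  qed
qed

lemma trace_matrix_sqrt2:
  fixes M :: "real^2^2"
  assumes "M$1$2 = M$2$1" "0 \<le> M$1$1" "0 \<le> M$2$2" "(M$1$2)^2 \<le> M$1$1 * M$2$2"
  shows "trace (matrix_sqrt M) = sqrt (M$1$1 + M$2$2 + 2* sqrt(M$1$1*M$2$2 - (M$1$2)^2))"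
proof -
  obtain S where S: "psd_matrix S \<and> S ** S = M" using sqrt2_exists[OF assms] by blast
  have "matrix_sqrt M = S" unfolding matrix_sqrt_def
    by (rule the_equality) (use S sqrt2_unique in blast)+
  then show ?thesis using sqrt2_props(1) S by simp
qed

definition GG :: "'a::real_inner \<Rightarrow> 'a \<Rightarrow> real" where
  "GG x y = (x \<bullet> x) * (y \<bullet> y) - (x \<bullet> y)^2"

definition UU :: "'a::real_inner \<Rightarrow> 'a \<Rightarrow> real" where
  "UU x y = sqrt (x \<bullet> x + y \<bullet> y + 2 * sqrt (GG x y))"

lemma GG_nonneg: "0 \<le> GG x y"
  using Cauchy_Schwarz_ineq[of x y] by (simp add: GG_def)

lemma UU_nonneg: "0 \<le> UU x y"
  unfolding UU_def by (intro real_sqrt_ge_zero add_nonneg_nonneg) (auto simp: GG_nonneg)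

lemma schatten1_UU:
  fixes L :: "real^2^3"
  shows "schatten1 L = UU (column 1 L) (column 2 L)"
proof -
  let ?M = "transpose L ** L"
  have M: "?M $ i $ j = column i L \<bullet> column j L" for i j
    by (simp add: matrix_mult_transpose_dot_column)
  have "trace (matrix_sqrt ?M) = sqrt (?M$1$1 + ?M$2$2 + 2 * sqrt(?M$1$1*?M$2$2 - (?M$1$2)^2))"
    by (rule trace_matrix_sqrt2) (auto simp: M inner_commute Cauchy_Schwarz_ineq)
  then show ?thesis by (simp add: schatten1_def UU_def GG_def M)
qed

lemma vd_inner:
  fixes f g :: "real \<Rightarrow> 'a::real_inner"
  assumes "(f has_vector_derivative f') (at x within S)" "(g has_vector_derivative g') (at x within S)"
  shows "((\<lambda>r. f r \<bullet> g r) has_real_derivative (f x \<bullet> g' + f' \<bullet> g x)) (at x within S)"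
proof -
  have "((\<lambda>r. f r \<bullet> g r) has_derivative (\<lambda>h. f x \<bullet> (h *\<^sub>R g') + (h *\<^sub>R f') \<bullet> g x)) (at x within S)"
    using has_derivative_inner[OF assms[unfolded has_vector_derivative_def]] .
  then show ?thesis unfolding has_field_derivative_def
    by (rule has_derivative_eq_rhs) (auto simp: algebra_simps fun_eq_iff)
qed

lemma bl_column: "bounded_linear (\<lambda>M::real^'n^'m. column j M)"
  by (rule linear_conv_bounded_linear[THEN iffD1]) (auto simp: linear_iff column_def vec_eq_iff)

lemma scal_bound:
  fixes a1 a2 b1 b2 p r c :: real
  assumes p: "0 \<le> p" and r: "0 \<le> r" and c: "c^2 \<le> p*r"
  shows "a1 + b2 \<le> sqrt ((a1^2+a2^2+p) + (b1^2+b2^2+r)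
           + 2 * sqrt ((a1^2+a2^2+p)*(b1^2+b2^2+r) - (a1*b1+a2*b2+c)^2))"
proof -
  define S U K \<delta> where "S = a1^2+a2^2" "U = b1^2+b2^2" "K = a1*b1+a2*b2" "\<delta> = a1*b2 - a2*b1"
  have lag: "K^2 + \<delta>^2 = S*U" unfolding S_U_K_\<delta>_def by (simp add: algebra_simps power2_eq_square)
  have S0: "0 \<le> S" and U0: "0 \<le> U" unfolding S_U_K_\<delta>_def by simp_all
  have K2: "K^2 \<le> S*U" using lag zero_le_power2[of \<delta>] by linarith
  have "(2*K*c)^2 \<le> (S*r + p*U)^2"
  proof -
    have "(2*K*c)^2 = 4*K^2*c^2" by (simp add: power_mult_distrib)
    also have "\<dots> \<le> 4*(S*U)*(p*r)"
    proof -
      have "K^2*c^2 \<le> (S*U)*(p*r)" using K2 c S0 U0 by (simp add: mult_mono)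
      then show ?thesis by simp
    qed
    also have "\<dots> \<le> (S*r + p*U)^2"
    proof -
      have "(S*r + p*U)^2 - 4*(S*U)*(p*r) = (S*r - p*U)^2" by (simp add: algebra_simps power2_eq_square)
      then show ?thesis using zero_le_power2[of "S*r - p*U"] by linarith
    qed
    finally show ?thesis .
  qed
  then have kc: "2*K*c \<le> S*r + p*U"
    by (rule power2_le_imp_le) (use S0 U0 p r in simp)
  have ex: "(S+p)*(U+r) - (K+c)^2 = (S*U - K^2) + (S*r + p*U - 2*K*c) + (p*r - c^2)"
    by (simp add: algebra_simps power2_eq_square)
  have dl: "\<delta>^2 \<le> (S+p)*(U+r) - (K+c)^2" using ex lag kc c by linarith
  define sq where "sq = sqrt ((S+p)*(U+r) - (K+c)^2)"
  have sq: "\<bar>\<delta>\<bar> \<le> sq" unfolding sq_def using real_sqrt_le_mono[OF dl] by simp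
  have d1: "a1*b2 \<le> \<bar>\<delta>\<bar> + a2*b1" unfolding S_U_K_\<delta>_def by simp
  have d2: "2*(a2*b1) \<le> a2^2 + b1^2"
  proof -
    have "a2^2 + b1^2 - 2*(a2*b1) = (a2 - b1)^2" by (simp add: algebra_simps power2_eq_square)
    then show ?thesis using zero_le_power2[of "a2 - b1"] by linarith
  qed
  have e: "(a1+b2)^2 = a1^2 + b2^2 + 2*(a1*b2)" by (simp add: algebra_simps power2_eq_square)
  have SU: "S + U = a1^2 + b2^2 + (a2^2 + b1^2)" unfolding S_U_K_\<delta>_def by simp
  have "(a1+b2)^2 \<le> (S+p) + (U+r) + 2 * sq"
    unfolding e using d1 d2 sq p r SU by linarith
  then have "\<bar>a1+b2\<bar> \<le> sqrt ((S+p) + (U+r) + 2 * sq)"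
    using real_sqrt_le_mono by fastforce
  then show ?thesis unfolding sq_def S_U_K_\<delta>_def by simp
qed

lemma orth_bound:
  fixes q1 q2 x y :: "'a::real_inner"
  assumes "q1 \<bullet> q1 = 1" "q2 \<bullet> q2 = 1" "q1 \<bullet> q2 = 0"
  shows "q1 \<bullet> x + q2 \<bullet> y \<le> UU x y"
proof -
  define a1 a2 b1 b2 where "a1 = q1 \<bullet> x" "a2 = q2 \<bullet> x" "b1 = q1 \<bullet> y" "b2 = q2 \<bullet> y"
  define xn yn where "xn = x - a1 *\<^sub>R q1 - a2 *\<^sub>R q2" "yn = y - b1 *\<^sub>R q1 - b2 *\<^sub>R q2"
  have q21: "q2 \<bullet> q1 = 0" using assms(3) by (simp add: inner_commute)
  have o: "q1 \<bullet> xn = 0" "q2 \<bullet> xn = 0" "q1 \<bullet> yn = 0" "q2 \<bullet> yn = 0"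
    using assms q21 by (simp_all add: xn_yn_def a1_a2_b1_b2_def inner_diff_right)
  have o': "xn \<bullet> q1 = 0" "xn \<bullet> q2 = 0" "yn \<bullet> q1 = 0" "yn \<bullet> q2 = 0"
    using o by (simp_all add: inner_commute)
  have xd: "x = xn + a1 *\<^sub>R q1 + a2 *\<^sub>R q2" and yd: "y = yn + b1 *\<^sub>R q1 + b2 *\<^sub>R q2"
    by (simp_all add: xn_yn_def)
  have "x \<bullet> x = a1^2+a2^2+ xn \<bullet> xn"
    apply (subst (1 2) xd)
    using assms o o' q21 by (simp add: inner_add_left inner_add_right power2_eq_square)
  moreover have "y \<bullet> y = b1^2+b2^2+ yn \<bullet> yn"
    apply (subst (1 2) yd)
    using assms o o' q21 by (simp add: inner_add_left inner_add_right power2_eq_square)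
  moreover have "x \<bullet> y = a1*b1+a2*b2+ xn \<bullet> yn"
    apply (subst xd, subst yd)
    using assms o o' q21 by (simp add: inner_add_left inner_add_right)
  ultimately have "UU x y = sqrt ((a1^2+a2^2+xn \<bullet> xn) + (b1^2+b2^2+yn \<bullet> yn)
           + 2 * sqrt ((a1^2+a2^2+xn \<bullet> xn)*(b1^2+b2^2+yn \<bullet> yn) - (a1*b1+a2*b2+xn \<bullet> yn)^2))"
    by (simp add: UU_def GG_def)
  moreover have "a1 + b2 \<le> \<dots>"
    by (rule scal_bound) (auto simp: Cauchy_Schwarz_ineq)
  ultimately show ?thesis by (simp add: a1_a2_b1_b2_def)
qed

lemma frob_bound:
  fixes a b x y :: "'a::real_inner"
  assumes "0 < a \<bullet> a + b \<bullet> b"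
  shows "(a \<bullet> x + b \<bullet> y) / sqrt (a \<bullet> a + b \<bullet> b) \<le> UU x y"
proof -
  have "a \<bullet> x + b \<bullet> y \<le> norm a * norm x + norm b * norm y"
    using Cauchy_Schwarz_ineq2[of a x] Cauchy_Schwarz_ineq2[of b y] by linarith
  also have "\<dots> \<le> sqrt ((norm a)^2 + (norm b)^2) * sqrt ((norm x)^2 + (norm y)^2)"
  proof -
    have "(norm a * norm x + norm b * norm y)^2 \<le> ((norm a)^2 + (norm b)^2) * ((norm x)^2 + (norm y)^2)"
      using sum_squares_ge_zero[of "norm a * norm y - norm b * norm x" 0]
      by (simp add: algebra_simps power2_eq_square)
    then have "norm a * norm x + norm b * norm y \<le> sqrt (((norm a)^2 + (norm b)^2) * ((norm x)^2 + (norm y)^2))"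
      by (intro real_le_rsqrt) auto
    then show ?thesis by (simp add: real_sqrt_mult)
  qed
  finally have "(a \<bullet> x + b \<bullet> y) / sqrt (a \<bullet> a + b \<bullet> b) \<le> sqrt (x \<bullet> x + y \<bullet> y)"
    using assms by (simp add: divide_simps power2_norm_eq_inner mult.commute)
  also have "\<dots> \<le> UU x y" unfolding UU_def
    by (rule real_sqrt_le_mono) (simp add: GG_nonneg)
  finally show ?thesis .
qed


lemma rank2_q:
  fixes a b :: "'a::real_inner"
  assumes G: "GG a b > 0"
  defines "d \<equiv> sqrt (GG a b)" and "t \<equiv> UU a b"
  defines "q1 \<equiv> (1/(d*t)) *\<^sub>R ((b \<bullet> b + d) *\<^sub>R a - (a \<bullet> b) *\<^sub>R b)"
    and "q2 \<equiv> (1/(d*t)) *\<^sub>R ((a \<bullet> a + d) *\<^sub>R b - (a \<bullet> b) *\<^sub>R a)"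
  shows "q1 \<bullet> x + q2 \<bullet> y = ((b \<bullet> b + d)*(a \<bullet> x) - (a \<bullet> b)*(b \<bullet> x) + (a \<bullet> a + d)*(b \<bullet> y) - (a \<bullet> b)*(a \<bullet> y)) / (d*t)"
    and "q1 \<bullet> q1 = 1" "q2 \<bullet> q2 = 1" "q1 \<bullet> q2 = 0" "q1 \<bullet> a + q2 \<bullet> b = t"
    and "0 < d" "0 < t" "t^2 = a \<bullet> a + b \<bullet> b + 2*d" "d^2 = (a \<bullet> a)*(b \<bullet> b) - (a \<bullet> b)^2"
proof -
  show dp: "0 < d" using G by (simp add: d_def)
  show dd: "d^2 = (a \<bullet> a)*(b \<bullet> b) - (a \<bullet> b)^2" using G by (simp add: d_def GG_def)
  have tt0: "0 < a \<bullet> a + b \<bullet> b + 2*d" using dp by (simp add: add_nonneg_pos)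
  show tp: "0 < t" using tt0 by (simp add: t_def UU_def d_def)
  show tt: "t^2 = a \<bullet> a + b \<bullet> b + 2*d" using tt0 by (simp add: t_def UU_def d_def)
  define A B C where "A = a \<bullet> a" "B = b \<bullet> b" "C = a \<bullet> b"
  have A0: "0 \<le> A" "0 \<le> B" by (simp_all add: A_B_C_def)
  have ba: "b \<bullet> a = C" by (simp add: A_B_C_def inner_commute)
  show gen: "q1 \<bullet> x + q2 \<bullet> y = ((b \<bullet> b + d)*(a \<bullet> x) - (a \<bullet> b)*(b \<bullet> x) + (a \<bullet> a + d)*(b \<bullet> y) - (a \<bullet> b)*(a \<bullet> y)) / (d*t)" for x y
    by (simp add: q1_def q2_def inner_diff_left inner_scaleR_left add_divide_distrib diff_divide_distrib)
  have dt: "d*t \<noteq> 0" using dp tp by simp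
  have "q1 \<bullet> q1 = ((B+d)^2*A - 2*(B+d)*C^2 + C^2*B) / (d*t)^2"
    by (simp add: q1_def inner_diff_left inner_diff_right inner_scaleR_left inner_scaleR_right ba
        A_B_C_def[symmetric] power2_eq_square divide_simps dt) (simp add: algebra_simps)
  also have "(B+d)^2*A - 2*(B+d)*C^2 + C^2*B = (d*t)^2"
    using dd tt unfolding A_B_C_def[symmetric] power_mult_distrib by algebra
  finally show "q1 \<bullet> q1 = 1" using dt by simp
  have "q2 \<bullet> q2 = ((A+d)^2*B - 2*(A+d)*C^2 + C^2*A) / (d*t)^2"
    by (simp add: q2_def inner_diff_left inner_diff_right inner_scaleR_left inner_scaleR_right ba
        A_B_C_def[symmetric] power2_eq_square divide_simps dt) (simp add: algebra_simps)
  also have "(A+d)^2*B - 2*(A+d)*C^2 + C^2*A = (d*t)^2"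
    using dd tt unfolding A_B_C_def[symmetric] power_mult_distrib by algebra
  finally show "q2 \<bullet> q2 = 1" using dt by simp
  have "q1 \<bullet> q2 = ((B+d)*(A+d)*C - (B+d)*C*A - C*(A+d)*B + C^2*C) / (d*t)^2"
    by (simp add: q1_def q2_def inner_diff_left inner_diff_right inner_scaleR_left inner_scaleR_right ba
        A_B_C_def[symmetric] power2_eq_square divide_simps dt) (simp add: algebra_simps)
  also have "(B+d)*(A+d)*C - (B+d)*C*A - C*(A+d)*B + C^2*C = 0"
    using dd unfolding A_B_C_def[symmetric] by algebra
  finally show "q1 \<bullet> q2 = 0" by simp
  have "q1 \<bullet> a + q2 \<bullet> b = ((B+d)*A - C*C + (A+d)*B - C*C) / (d*t)"
    using gen[of a b] by (simp add: A_B_C_def ba)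
  also have "(B+d)*A - C*C + (A+d)*B - C*C = d*t*t"
    using dd tt unfolding A_B_C_def[symmetric] by algebra
  finally show "q1 \<bullet> a + q2 \<bullet> b = t" using dt by simp
qed


lemma scal_pos:
  fixes x11 x12 x22 n11 n12 n22 :: real
  assumes "0 < x11" "0 < x22" "x12^2 < x11*x22" "0 \<le> n11" "0 \<le> n22" "n12^2 \<le> n11*n22"
  shows "0 \<le> x11*n11 - 2*x12*n12 + x22*n22"
    and "0 < n11 \<or> 0 < n22 \<Longrightarrow> 0 < x11*n11 - 2*x12*n12 + x22*n22"
proof -
  define P where "P = x11*n11 + x22*n22"
  have P0: "0 \<le> P" using assms by (simp add: P_def)
  have amgm: "4*(x11*x22)*(n11*n22) \<le> P^2"
  proof -
    have "P^2 - 4*(x11*x22)*(n11*n22) = (x11*n11 - x22*n22)^2" by (simp add: P_def algebra_simps power2_eq_square)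
    then show ?thesis using zero_le_power2[of "x11*n11 - x22*n22"] by linarith
  qed
  have nn: "0 \<le> n11*n22" using assms by simp
  have x12le: "x12^2 \<le> x11*x22" using assms by simp
  have "(2*x12*n12)^2 = 4*(x12^2)*(n12^2)" by (simp add: power_mult_distrib)
  also have "\<dots> \<le> 4*(x11*x22)*(n11*n22)"
    using mult_mono[OF x12le assms(6)] assms by simp
  finally have sq: "(2*x12*n12)^2 \<le> P^2" using amgm by linarith
  have "2*x12*n12 \<le> P" by (rule power2_le_imp_le[OF sq P0])
  then show "0 \<le> x11*n11 - 2*x12*n12 + x22*n22" by (simp add: P_def)
  assume disj: "0 < n11 \<or> 0 < n22"
  show "0 < x11*n11 - 2*x12*n12 + x22*n22"
  proof (cases "n11*n22 = 0")
    case True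
    then have "n12^2 \<le> 0" using assms(6) by linarith
    then have "n12 = 0" by simp
    moreover have "0 < x11*n11 + x22*n22"
      using disj assms by (auto intro: add_pos_nonneg add_nonneg_pos)
    ultimately show ?thesis by simp
  next
    case False
    then have "0 < n11*n22" using nn by linarith
    have "(x12^2)*(n12^2) \<le> (x12^2)*(n11*n22)" using assms(6) by (simp add: mult_left_mono)
    also have "\<dots> < (x11*x22)*(n11*n22)" using assms(3) \<open>0 < n11*n22\<close> by (simp add: mult_strict_right_mono)
    finally have "4*(x12^2)*(n12^2) < 4*(x11*x22)*(n11*n22)" by simp
    then have "(2*x12*n12)^2 < P^2" using amgm by (simp add: power_mult_distrib)
    then have "2*x12*n12 < P" using P0 by (rule power_less_imp_less_base)
    then show ?thesis by (simp add: P_def)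
  qed
qed

definition GGd :: "'a::real_inner \<Rightarrow> 'a \<Rightarrow> 'a \<Rightarrow> 'a \<Rightarrow> real" where
  "GGd x y x' y' = 2*(x \<bullet> x')*(y \<bullet> y) + 2*(x \<bullet> x)*(y \<bullet> y') - 2*(x \<bullet> y)*(x' \<bullet> y + x \<bullet> y')"

definition UUd :: "'a::real_inner \<Rightarrow> 'a \<Rightarrow> 'a \<Rightarrow> 'a \<Rightarrow> real" where
  "UUd x y x' y' = (2*(x \<bullet> x') + 2*(y \<bullet> y') + GGd x y x' y' / sqrt (GG x y)) / (2 * UU x y)"

lemma strict_support:
  fixes a b :: "real^'n" and M :: "real^'n^'n"
  assumes G: "GG a b > 0" and M: "psd_matrix M"
  shows "\<exists>q1 q2. (\<forall>x y. q1 \<bullet> x + q2 \<bullet> y \<le> UU x y) \<and> q1 \<bullet> a + q2 \<bullet> b = UU a b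
     \<and> 0 \<le> q1 \<bullet> (M *v a) + q2 \<bullet> (M *v b)
     \<and> (M *v a \<noteq> 0 \<or> M *v b \<noteq> 0 \<longrightarrow> 0 < q1 \<bullet> (M *v a) + q2 \<bullet> (M *v b))
     \<and> (\<forall>x y. q1 \<bullet> x + q2 \<bullet> y = UUd a b x y)"
proof -
  define d where "d = sqrt (GG a b)"
  define t where "t = UU a b"
  define q1 where "q1 = (1/(d*t)) *\<^sub>R ((b \<bullet> b + d) *\<^sub>R a - (a \<bullet> b) *\<^sub>R b)"
  define q2 where "q2 = (1/(d*t)) *\<^sub>R ((a \<bullet> a + d) *\<^sub>R b - (a \<bullet> b) *\<^sub>R a)"
  note R = rank2_q[OF G, folded d_def t_def, folded q1_def q2_def]
  have sym: "transpose M = M" using M by (simp add: psd_matrix_def)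
  have dt: "0 < d*t" using R by simp
  let ?x11 = "b \<bullet> b + d" and ?x22 = "a \<bullet> a + d" and ?x12 = "a \<bullet> b"
  let ?n11 = "a \<bullet> (M *v a)" and ?n22 = "b \<bullet> (M *v b)" and ?n12 = "a \<bullet> (M *v b)"
  have val: "q1 \<bullet> (M *v a) + q2 \<bullet> (M *v b) = (?x11*?n11 - 2*?x12*?n12 + ?x22*?n22)/(d*t)"
    unfolding R(1) using sym_dot[OF sym, of b a] by (simp add: algebra_simps)
  have x11: "0 < ?x11" and x22: "0 < ?x22" using R by (auto intro: add_nonneg_pos)
  have x12: "?x12^2 < ?x11*?x22"
  proof -
    have "?x11*?x22 - ?x12^2 = d^2 + d*(a \<bullet> a + b \<bullet> b) + d^2" using R(9) by (simp add: algebra_simps power2_eq_square)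
    moreover have "0 < d^2 + d*(a \<bullet> a + b \<bullet> b) + d^2" using R(6) by (intro add_pos_pos add_pos_nonneg) auto
    ultimately show ?thesis by linarith
  qed
  have n11: "0 \<le> ?n11" and n22: "0 \<le> ?n22" using M by (auto simp: psd_matrix_def)
  have n12: "?n12^2 \<le> ?n11*?n22" by (rule psd_cs[OF M])
  note sp = scal_pos[OF x11 x22 x12 n11 n22 n12]
  show ?thesis
  proof (intro exI conjI allI impI)
    show "q1 \<bullet> x + q2 \<bullet> y \<le> UU x y" for x y by (rule orth_bound) (use R in auto)
    show "q1 \<bullet> a + q2 \<bullet> b = UU a b" using R t_def by simp
    show "0 \<le> q1 \<bullet> (M *v a) + q2 \<bullet> (M *v b)" unfolding val using sp(1) dt by simp
    assume "M *v a \<noteq> 0 \<or> M *v b \<noteq> 0"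
    then have "0 < ?n11 \<or> 0 < ?n22" using psd_zero[OF M, of a] psd_zero[OF M, of b] n11 n22 by force
    then show "0 < q1 \<bullet> (M *v a) + q2 \<bullet> (M *v b)" unfolding val using sp(2) dt by simp
  next
    fix x y
    have "UUd a b x y = (2*d*(a \<bullet> x) + 2*d*(b \<bullet> y) + GGd a b x y) / (2*d*t)"
      unfolding UUd_def d_def[symmetric] t_def[symmetric] using R(6) by (simp add: field_simps)
    also have "\<dots> = q1 \<bullet> x + q2 \<bullet> y"
      unfolding R(1) GGd_def using R(6,7) by (simp add: field_simps inner_commute)
    finally show "q1 \<bullet> x + q2 \<bullet> y = UUd a b x y" by simp
  qed
qed


lemma support:
  fixes a b :: "real^'n" and M :: "real^'n^'n"
  assumes M: "psd_matrix M"
  shows "\<exists>q1 q2. (\<forall>x y. q1 \<bullet> x + q2 \<bullet> y \<le> UU x y) \<and> q1 \<bullet> a + q2 \<bullet> b = UU a b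
     \<and> 0 \<le> q1 \<bullet> (M *v a) + q2 \<bullet> (M *v b)"
proof (cases "GG a b > 0")
  case True
  then show ?thesis using strict_support[OF True M] by blast
next
  case False
  then have G0: "GG a b = 0" using GG_nonneg[of a b] by linarith
  show ?thesis
  proof (cases "a \<bullet> a + b \<bullet> b = 0")
    case True
    then have "UU a b = 0" using G0 by (simp add: UU_def)
    then show ?thesis
      by (intro exI[of _ 0] conjI allI) (auto simp: UU_nonneg)
  next
    case False
    then have fp: "0 < a \<bullet> a + b \<bullet> b" by (simp add: add_nonneg_nonneg order_le_neq_trans)
    define f where "f = sqrt (a \<bullet> a + b \<bullet> b)"
    have fp': "0 < f" using fp by (simp add: f_def)
    have U: "UU a b = f" using G0 by (simp add: UU_def f_def)
    have n: "0 \<le> a \<bullet> (M *v a)" "0 \<le> b \<bullet> (M *v b)" using M by (auto simp: psd_matrix_def)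
    have h1: "(1/f) *\<^sub>R a \<bullet> x + (1/f) *\<^sub>R b \<bullet> y \<le> UU x y" for x y
      using frob_bound[OF fp, of x y] by (simp add: f_def add_divide_distrib)
    have "(1/f) *\<^sub>R a \<bullet> a + (1/f) *\<^sub>R b \<bullet> b = f^2 / f" using fp by (simp add: f_def add_divide_distrib)
    then have h2: "(1/f) *\<^sub>R a \<bullet> a + (1/f) *\<^sub>R b \<bullet> b = UU a b" using U fp' by (simp add: power2_eq_square)
    have h3: "0 \<le> (1/f) *\<^sub>R a \<bullet> (M *v a) + (1/f) *\<^sub>R b \<bullet> (M *v b)" using n fp' by simp
    show ?thesis using h1 h2 h3 by blast
  qed
qed

lemma vd_inner_eq:
  fixes f g :: "real \<Rightarrow> 'a::real_inner"
  assumes "(f has_vector_derivative f') (at x within S)" "(g has_vector_derivative g') (at x within S)"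
    and "D = f x \<bullet> g' + f' \<bullet> g x"
  shows "((\<lambda>r. f r \<bullet> g r) has_real_derivative D) (at x within S)"
  using vd_inner[OF assms(1,2)] assms(3) by simp

lemma GG_deriv:
  fixes a b :: "real \<Rightarrow> 'a::real_inner"
  assumes "(a has_vector_derivative a') (at x within S)" "(b has_vector_derivative b') (at x within S)"
  shows "((\<lambda>r. GG (a r) (b r)) has_real_derivative GGd (a x) (b x) a' b') (at x within S)"
  unfolding GG_def
  apply (rule derivative_eq_intros vd_inner_eq[OF assms(1) assms(1)] vd_inner_eq[OF assms(2) assms(2)]
        vd_inner_eq[OF assms(1) assms(2)] refl)+
  apply (simp add: GGd_def algebra_simps inner_commute)
  done

lemma UU_deriv:
  fixes a b :: "real \<Rightarrow> 'a::real_inner"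
  assumes a: "(a has_vector_derivative a') (at x within S)" and b: "(b has_vector_derivative b') (at x within S)"
    and G: "0 < GG (a x) (b x)"
  shows "((\<lambda>r. UU (a r) (b r)) has_real_derivative UUd (a x) (b x) a' b') (at x within S)"
proof -
  have tt0: "0 < a x \<bullet> a x + b x \<bullet> b x + 2 * sqrt (GG (a x) (b x))" using G
    by (simp add: add_nonneg_pos)
  have sg: "((\<lambda>r. sqrt (GG (a r) (b r))) has_real_derivative
      inverse (sqrt (GG (a x) (b x))) / 2 * GGd (a x) (b x) a' b') (at x within S)"
    by (rule DERIV_chain2[OF DERIV_real_sqrt[OF G] GG_deriv[OF a b]])
  have inn: "((\<lambda>r. a r \<bullet> a r + b r \<bullet> b r + 2 * sqrt (GG (a r) (b r))) has_real_derivative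
      (a x \<bullet> a' + a' \<bullet> a x) + (b x \<bullet> b' + b' \<bullet> b x) + 2 * (inverse (sqrt (GG (a x) (b x))) / 2 * GGd (a x) (b x) a' b')) (at x within S)"
    by (intro DERIV_add DERIV_cmult vd_inner[OF a a] vd_inner[OF b b] sg)
  have "((\<lambda>r. UU (a r) (b r)) has_real_derivative
      inverse (UU (a x) (b x)) / 2 * ((a x \<bullet> a' + a' \<bullet> a x) + (b x \<bullet> b' + b' \<bullet> b x) + 2 * (inverse (sqrt (GG (a x) (b x))) / 2 * GGd (a x) (b x) a' b'))) (at x within S)"
    unfolding UU_def by (rule DERIV_chain2[OF DERIV_real_sqrt[OF tt0] inn])
  then show ?thesis
    by (rule DERIV_cong) (simp add: UUd_def inner_commute field_simps)
qed


lemma second_test: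
  fixes h h' :: "real \<Rightarrow> real"
  assumes s: "s \<in> {0..1}" and e: "0 < e"
    and min: "\<And>r. r \<in> ball s e \<inter> {0..1} \<Longrightarrow> h s \<le> h r"
    and d1: "\<And>r. r \<in> ball s e \<inter> {0..1} \<Longrightarrow> (h has_real_derivative h' r) (at r within {0..1})"
    and h0: "h' s = 0"
    and d2: "(h' has_real_derivative c) (at s within {0..1})"
  shows "0 \<le> c"
proof (rule ccontr)
  assume "\<not> 0 \<le> c"
  then have cn: "c < 0" by simp
  have "((\<lambda>y. (h' y - h' s) / (y - s)) \<longlongrightarrow> c) (at s within {0..1})"
    using d2 by (simp add: has_field_derivative_iff)
  then have "eventually (\<lambda>y. (h' y - h' s) / (y - s) < 0) (at s within {0..1})"
    using cn by (rule order_tendstoD)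
  then obtain \<delta> where dp: "0 < \<delta>" and dl: "\<And>y. y \<in> {0..1} \<Longrightarrow> y \<noteq> s \<Longrightarrow> dist y s < \<delta> \<Longrightarrow> h' y / (y - s) < 0"
    unfolding eventually_at using h0 by auto
  define \<rho> where "\<rho> = min \<delta> e / 2"
  have rp: "0 < \<rho>" "\<rho> < \<delta>" "\<rho> < e" using dp e by (auto simp: \<rho>_def)
  have sub: "r \<in> ball s e \<inter> {0..1}" if "r \<in> {0..1}" "\<bar>r - s\<bar> \<le> \<rho>" for r
    using that rp by (auto simp: dist_real_def)
  show False
  proof (cases "s < 1")
    case True
    define y where "y = min (s + \<rho>) 1"
    have sy: "s < y" "y \<le> 1" "y - s \<le> \<rho>" using True rp by (auto simp: y_def)
    have I: "{s..y} \<subseteq> {0..1}" using s sy by auto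
    have "\<exists>\<xi>\<in>{s<..<y}. h y - h s = (\<lambda>t. h' \<xi> * t) (y - s)"
    proof (rule mvt_simple[OF sy(1)])
      fix x assume "s \<le> x" "x \<le> y"
      then have "x \<in> ball s e \<inter> {0..1}" using sub[of x] s sy by auto
      then have "(h has_real_derivative h' x) (at x within {s..y})"
        using d1 I by (blast intro: DERIV_subset)
      then show "(h has_derivative (\<lambda>t. h' x * t)) (at x within {s..y})"
        by (simp add: has_field_derivative_def)
    qed
    then obtain \<xi> where xi: "s < \<xi>" "\<xi> < y" and eq: "h y - h s = h' \<xi> * (y - s)" by auto
    have "h' \<xi> / (\<xi> - s) < 0" using dl[of \<xi>] xi sy s rp by (auto simp: dist_real_def)
    then have "h' \<xi> < 0" using xi by (simp add: divide_less_0_iff)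
    then have "h' \<xi> * (y - s) < 0" using sy by (simp add: mult_neg_pos)
    then have "h y < h s" using eq by simp
    moreover have "h s \<le> h y" using min sub[of y] sy s by auto
    ultimately show False by simp
  next
    case False
    then have s1: "s = 1" using s by simp
    define y where "y = max (s - \<rho>) 0"
    have sy: "y < s" "0 \<le> y" "s - y \<le> \<rho>" using s1 rp by (auto simp: y_def)
    have I: "{y..s} \<subseteq> {0..1}" using s sy by auto
    have "\<exists>\<xi>\<in>{y<..<s}. h s - h y = (\<lambda>t. h' \<xi> * t) (s - y)"
    proof (rule mvt_simple[OF sy(1)])
      fix x assume "y \<le> x" "x \<le> s"
      then have "x \<in> ball s e \<inter> {0..1}" using sub[of x] s sy by auto
      then have "(h has_real_derivative h' x) (at x within {y..s})"
        using d1 I by (blast intro: DERIV_subset)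
      then show "(h has_derivative (\<lambda>t. h' x * t)) (at x within {y..s})"
        by (simp add: has_field_derivative_def)
    qed
    then obtain \<xi> where xi: "y < \<xi>" "\<xi> < s" and eq: "h s - h y = h' \<xi> * (s - y)" by auto
    have "h' \<xi> / (\<xi> - s) < 0" using dl[of \<xi>] xi sy s rp by (auto simp: dist_real_def)
    then have "h' \<xi> > 0" using xi by (simp add: divide_less_0_iff)
    then have "h' \<xi> * (s - y) > 0" using sy by simp
    then have "h y < h s" using eq by simp
    moreover have "h s \<le> h y" using min sub[of y] sy s by auto
    ultimately show False by simp
  qed
qed


lemma convex_from_support:
  fixes u :: "real \<Rightarrow> real"
  assumes cont: "continuous_on {0..1} u"
    and supp: "\<And>m. m \<in> {0<..<1} \<Longrightarrow> \<exists>l l' l''. (\<forall>r\<in>{0..1}. l r \<le> u r) \<and> l m = u m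
        \<and> (\<forall>r\<in>{0..1}. (l has_real_derivative l' r) (at r within {0..1}))
        \<and> (l' has_real_derivative l'') (at m within {0..1}) \<and> 0 \<le> l''"
  shows "convex_on {0..1} u"
proof -
  have chord: "u z \<le> u x + (u y - u x) / (y - x) * (z - x)"
    if xy: "0 \<le> x" "x < y" "y \<le> 1" "x \<le> z" "z \<le> y" for x y z
  proof (rule ccontr)
    define \<kappa> where "\<kappa> = (u y - u x) / (y - x)"
    define ch where "ch r = u x + \<kappa> * (r - x)" for r
    assume "\<not> ?thesis"
    then have etap: "0 < u z - ch z" by (simp add: ch_def \<kappa>_def)
    define \<eta> where "\<eta> = u z - ch z"
    define \<epsilon> where "\<epsilon> = \<eta> / (2*(y-x)^2)"
    have ep: "0 < \<epsilon>" using etap xy by (simp add: \<epsilon>_def \<eta>_def)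
    define w where "w r = u r - ch r + \<epsilon> * ((r - x) * (r - y))" for r
    have cw: "continuous_on {x..y} w"
      unfolding w_def ch_def
      by (intro continuous_intros continuous_on_subset[OF cont]) (use xy in auto)
    obtain m where m: "m \<in> {x..y}" and mmax: "\<And>r. r \<in> {x..y} \<Longrightarrow> w r \<le> w m"
      using continuous_attains_sup[OF compact_Icc _ cw] xy by auto
    have "(z - x) * (y - z) \<le> (y - x) * (y - x)" using xy by (intro mult_mono) auto
    then have "(z - x) * (z - y) \<ge> - ((y-x)^2)" by (simp add: power2_eq_square algebra_simps)
    then have "\<epsilon> * (- ((y-x)^2)) \<le> \<epsilon> * ((z - x) * (z - y))" using ep by (rule mult_left_mono[OF _ less_imp_le])
    then have "\<epsilon> * ((z - x) * (z - y)) \<ge> - \<epsilon> * (y-x)^2" by simp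
    moreover have "\<epsilon> * (y-x)^2 = \<eta>/2" using xy by (simp add: \<epsilon>_def)
    ultimately have "\<epsilon> * ((z - x) * (z - y)) \<ge> - (\<eta>/2)" by linarith
    moreover have "0 < \<eta>" using etap by (simp add: \<eta>_def)
    ultimately have "0 < \<eta> + \<epsilon> * ((z - x) * (z - y))" by linarith
    then have wz: "w z > 0" by (simp add: w_def \<eta>_def)
    have wx: "w x = 0" by (simp add: w_def ch_def)
    have wy: "w y = 0" using xy by (simp add: w_def ch_def \<kappa>_def)
    have wm: "w m > 0" using mmax[of z] xy wz by auto
    have mxy: "x < m" "m < y" using m wm wx wy by (auto simp: order_le_less)
    then have m01: "m \<in> {0<..<1}" using xy by auto
    obtain l l' l'' where lu: "\<forall>r\<in>{0..1}. l r \<le> u r" and lm: "l m = u m"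
      and dl: "\<forall>r\<in>{0..1}. (l has_real_derivative l' r) (at r within {0..1})"
      and dl2: "(l' has_real_derivative l'') (at m within {0..1})" and l2: "0 \<le> l''"
      using supp[OF m01] by blast
    define k where "k r = l r - ch r + \<epsilon> * ((r - x) * (r - y))" for r
    define k' where "k' r = l' r - \<kappa> + \<epsilon> * (2*r - x - y)" for r
    have dk: "(k has_real_derivative k' r) (at r within {0..1})" if "r \<in> {0..1}" for r
      unfolding k_def ch_def k'_def
      by (rule derivative_eq_intros dl[rule_format, OF that] refl)+ (simp add: algebra_simps)
    have dk2: "(k' has_real_derivative (l'' + 2*\<epsilon>)) (at m within {0..1})"
      unfolding k'_def
      by (rule derivative_eq_intros dl2 refl)+ (simp add: algebra_simps)
    have kle: "k r \<le> k m" if "r \<in> {x..y}" for r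
    proof -
      have "k r \<le> w r" using lu that xy by (simp add: k_def w_def)
      also have "\<dots> \<le> w m" using mmax that by simp
      also have "\<dots> = k m" using lm by (simp add: k_def w_def)
      finally show ?thesis .
    qed
    define e where "e = min (m - x) (y - m)"
    have e0: "0 < e" using mxy by (simp add: e_def)
    have ball_sub: "r \<in> {x..y}" if "\<bar>m - r\<bar> < e" for r using that by (auto simp: e_def abs_less_iff)
    have int: "m \<in> interior {0..1::real}" using m01 by simp
    have "(k has_real_derivative k' m) (at m)"
      using dk[of m] m01 at_within_interior[OF int] by simp
    then have k'0: "k' m = 0"
      by (rule DERIV_local_max[OF _ e0]) (use ball_sub kle in auto)
    have "0 \<le> - (l'' + 2*\<epsilon>)"
    proof (rule second_test[of m e "\<lambda>r. k m - k r" "\<lambda>r. - k' r"])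
      show "m \<in> {0..1}" using m01 by simp
      show "0 < e" by (rule e0)
      show "k m - k m \<le> k m - k r" if "r \<in> ball m e \<inter> {0..1}" for r
        using kle[of r] ball_sub[of r] that by (simp add: dist_real_def)
      show "((\<lambda>r. k m - k r) has_real_derivative - k' r) (at r within {0..1})" if "r \<in> ball m e \<inter> {0..1}" for r
        using that by (intro derivative_eq_intros dk) (auto intro: dk)
      show "- k' m = 0" using k'0 by simp
      show "((\<lambda>r. - k' r) has_real_derivative - (l'' + 2*\<epsilon>)) (at m within {0..1})"
        using DERIV_minus[OF dk2] by simp
    qed
    then show False using l2 ep by simp
  qed
  show ?thesis
  proof (rule convex_onI)
    show "convex {0..1::real}" by simp
    fix t x y :: real
    assume t: "0 < t" "t < 1" and x: "x \<in> {0..1}" and y: "y \<in> {0..1}"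
    consider "x < y" | "x = y" | "y < x" by linarith
    then show "u ((1 - t) *\<^sub>R x + t *\<^sub>R y) \<le> (1 - t) * u x + t * u y"
    proof cases
      case 1
      have e1: "(1 - t) * x + t * y - x = t*(y-x)" "y - ((1 - t) * x + t * y) = (1-t)*(y-x)"
        by (simp_all add: algebra_simps)
      have p1: "0 \<le> t*(y-x)" and p2: "0 \<le> (1-t)*(y-x)" using 1 t by simp_all
      have z1: "x \<le> (1 - t) * x + t * y" using e1(1) p1 by linarith
      have z2: "(1 - t) * x + t * y \<le> y" using e1(2) p2 by linarith
      note z = z1 z2
      have "u ((1 - t) * x + t * y) \<le> u x + (u y - u x) / (y - x) * ((1 - t) * x + t * y - x)"
        using chord[OF _ 1 _ z] x y by auto
      also have "\<dots> = (1 - t) * u x + t * u y" using 1 by (simp add: field_simps)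
      finally show ?thesis by simp
    next
      case 2
      then show ?thesis by (simp add: algebra_simps)
    next
      case 3
      have e1: "(1 - t) * x + t * y - y = (1-t)*(x-y)" "x - ((1 - t) * x + t * y) = t*(x-y)"
        by (simp_all add: algebra_simps)
      have p1: "0 \<le> t*(x-y)" and p2: "0 \<le> (1-t)*(x-y)" using 3 t by simp_all
      have z1: "y \<le> (1 - t) * x + t * y" using e1(1) p2 by linarith
      have z2: "(1 - t) * x + t * y \<le> x" using e1(2) p1 by linarith
      note z = z1 z2
      have "u ((1 - t) * x + t * y) \<le> u y + (u x - u y) / (x - y) * ((1 - t) * x + t * y - y)"
        using chord[OF _ 3 _ z] x y by auto
      also have "\<dots> = (1 - t) * u x + t * u y" using 3 by (simp add: field_simps)
      finally show ?thesis by simp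
    qed
  qed
qed


lemma ED_inner:
  fixes f g :: "real \<Rightarrow> 'a::real_inner"
  assumes "(f has_vector_derivative f') (at x within S)" "(g has_vector_derivative g') (at x within S)"
  shows "\<exists>D. ((\<lambda>r. f r \<bullet> g r) has_real_derivative D) (at x within S)"
  using vd_inner[OF assms] by blast

lemma ED_const: "\<exists>D. ((\<lambda>r. c) has_real_derivative D) (at x within S)"
  by (rule exI, rule DERIV_const)

lemma ED_add:
  "\<exists>D. (f has_real_derivative D) (at x within S) \<Longrightarrow> \<exists>D. (g has_real_derivative D) (at x within S)
   \<Longrightarrow> \<exists>D. ((\<lambda>r. f r + g r) has_real_derivative D) (at x within S)"
  by (blast intro: DERIV_add)

lemma ED_diff:
  "\<exists>D. (f has_real_derivative D) (at x within S) \<Longrightarrow> \<exists>D. (g has_real_derivative D) (at x within S)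
   \<Longrightarrow> \<exists>D. ((\<lambda>r. f r - g r) has_real_derivative D) (at x within S)"
  by (blast intro: DERIV_diff)

lemma ED_mult:
  "\<exists>D. (f has_real_derivative D) (at x within S) \<Longrightarrow> \<exists>D. (g has_real_derivative D) (at x within S)
   \<Longrightarrow> \<exists>D. ((\<lambda>r. f r * g r) has_real_derivative D) (at x within S)"
  by (blast intro: DERIV_mult)

lemma ED_divide:
  "\<exists>D. (f has_real_derivative D) (at x within S) \<Longrightarrow> \<exists>D. (g has_real_derivative D) (at x within S)
   \<Longrightarrow> g x \<noteq> 0 \<Longrightarrow> \<exists>D. ((\<lambda>r. f r / g r) has_real_derivative D) (at x within S)"
  by (blast intro: DERIV_divide)

lemma ED_power:
  "\<exists>D. (f has_real_derivative D) (at x within S)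
   \<Longrightarrow> \<exists>D. ((\<lambda>r. (f r)^n) has_real_derivative D) (at x within S)"
  by (blast intro: DERIV_power)

lemma ED_sqrt:
  "\<exists>D. (g has_real_derivative D) (at x within S) \<Longrightarrow> 0 < g x
   \<Longrightarrow> \<exists>D. ((\<lambda>r. sqrt (g r)) has_real_derivative D) (at x within S)"
  by (blast intro: DERIV_chain2[OF DERIV_real_sqrt])

lemma ED_UUd:
  fixes a b a1 b1 :: "real \<Rightarrow> 'a::real_inner"
  assumes a: "(a has_vector_derivative a') (at x within S)" and b: "(b has_vector_derivative b') (at x within S)"
    and a1: "(a1 has_vector_derivative a1') (at x within S)" and b1: "(b1 has_vector_derivative b1') (at x within S)"
    and G: "0 < GG (a x) (b x)"
  shows "\<exists>D. ((\<lambda>r. UUd (a r) (b r) (a1 r) (b1 r)) has_real_derivative D) (at x within S)"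
proof -
  have tt0: "0 < a x \<bullet> a x + b x \<bullet> b x + 2 * sqrt (GG (a x) (b x))" using G
    by (simp add: add_nonneg_pos)
  have G': "0 < a x \<bullet> a x * (b x \<bullet> b x) - (a x \<bullet> b x)^2" using G by (simp add: GG_def)
  have tt0': "0 < a x \<bullet> a x + b x \<bullet> b x + 2 * sqrt (a x \<bullet> a x * (b x \<bullet> b x) - (a x \<bullet> b x)^2)"
    using tt0 by (simp add: GG_def)
  show ?thesis
    unfolding UUd_def GGd_def UU_def GG_def
    apply (intro ED_divide ED_add ED_diff ED_mult ED_power ED_sqrt ED_const ED_inner)
    apply (assumption | rule a b a1 b1 | (use G' tt0' in simp))+
    done
qed


lemma col_mult: "column j (A ** B) = A *v column j B"
  by (simp add: column_def matrix_matrix_mult_def matrix_vector_mult_def vec_eq_iff)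

lemma mv2:
  fixes M :: "real^2^'m"
  shows "M *v x = x$1 *\<^sub>R column 1 M + x$2 *\<^sub>R column 2 M"
  by (simp add: vec_eq_iff matrix_vector_mult_def column_def sum_2 mult.commute)

lemma zero_cols:
  fixes M :: "real^2^'m"
  assumes "column 1 M = 0" "column 2 M = 0"
  shows "M = 0"
proof -
  have "M $ i $ j = 0" for i j
    using assms exhaust_2[of j] by (auto simp: column_def vec_eq_iff)
  then show ?thesis by (simp add: vec_eq_iff)
qed

lemma vd_qinner:
  fixes f :: "real \<Rightarrow> 'a::real_inner"
  assumes "(f has_vector_derivative f') (at x within S)"
  shows "((\<lambda>r. q \<bullet> f r) has_real_derivative q \<bullet> f') (at x within S)"
  using vd_inner[OF has_vector_derivative_const assms, of q] by simp

lemma rank2_GG: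
  fixes L :: "real^2^'m"
  assumes "rank L = 2"
  shows "0 < GG (column 1 L) (column 2 L)"
proof (rule ccontr)
  let ?a = "column 1 L" and ?b = "column 2 L"
  assume "\<not> ?thesis"
  then have G0: "GG ?a ?b = 0" using GG_nonneg[of ?a ?b] by linarith
  have "\<exists>x. x \<noteq> 0 \<and> L *v x = 0"
  proof (cases "?b = 0")
    case True
    show ?thesis
      by (rule exI[of _ "vector [0, 1]"]) (auto simp: mv2 True vec_eq_iff forall_2)
  next
    case False
    then have bb: "?b \<bullet> ?b \<noteq> 0" by simp
    let ?x = "vector [?b \<bullet> ?b, - (?a \<bullet> ?b)] :: real^2"
    have "L *v ?x = (?b \<bullet> ?b) *\<^sub>R ?a - (?a \<bullet> ?b) *\<^sub>R ?b" by (simp add: mv2)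
    moreover have "((?b \<bullet> ?b) *\<^sub>R ?a - (?a \<bullet> ?b) *\<^sub>R ?b) \<bullet> ((?b \<bullet> ?b) *\<^sub>R ?a - (?a \<bullet> ?b) *\<^sub>R ?b) = (?b \<bullet> ?b) * GG ?a ?b"
      by (simp add: GG_def inner_diff_left inner_diff_right inner_commute power2_eq_square algebra_simps)
    ultimately have "L *v ?x = 0" using G0 by simp
    moreover have "?x \<noteq> 0" using bb by (auto simp: vec_eq_iff forall_2)
    ultimately show ?thesis by blast
  qed
  then have "rank L \<noteq> CARD(2)" by (simp add: matrix_nonfull_linear_equations_eq)
  then show False using assms by simp
qed


theorem propositionA3:
  fixes A :: "real \<Rightarrow> real^3^3" and T :: "real \<Rightarrow> real^2^3"
    and DA :: "nat \<Rightarrow> real \<Rightarrow> real^3^3" and DT :: "nat \<Rightarrow> real \<Rightarrow> real^2^3"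
  assumes A_smooth: "smooth_derivs A DA"
    and A_pos: "\<forall>s\<in>{0..1}. psd_matrix (A s)"
    and T_smooth: "smooth_derivs T DT"
    and T_ode: "\<forall>s\<in>{0..1}. DT 2 s = A s ** T s"
  shows "convex_on {0..1} (\<lambda>s. schatten1 (T s))
    \<and> (\<forall>s\<in>{0..1}. rank (T s) = 2 \<and> A s ** T s \<noteq> 0 \<longrightarrow>
         (\<exists>e>0. \<exists>u' u''.
            (\<forall>t\<in>ball s e \<inter> {0..1}.
               ((\<lambda>r. schatten1 (T r)) has_real_derivative u' t) (at t within {0..1}))
            \<and> (u' has_real_derivative u'') (at s within {0..1})
            \<and> u'' > 0))"
proof -
  have D0: "\<And>t. t \<in> {0..1} \<Longrightarrow> DT 0 t = T t"
    and Dn: "\<And>n t. t \<in> {0..1} \<Longrightarrow> (DT n has_vector_derivative DT (Suc n) t) (at t within {0..1})"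
    using T_smooth by (auto simp: smooth_derivs_def)
  have TD1: "(T has_vector_derivative DT 1 t) (at t within {0..1})" if "t \<in> {0..1}" for t
  proof -
    have "(DT 0 has_vector_derivative DT 1 t) (at t within {0..1})" using Dn[OF that, of 0] by simp
    then show ?thesis by (rule has_vector_derivative_transform[OF that, rotated]) (use D0 in auto)
  qed
  have TD2: "(DT 1 has_vector_derivative A t ** T t) (at t within {0..1})" if "t \<in> {0..1}" for t
    using Dn[OF that, of 1] T_ode that by (simp add: numeral_2_eq_2)
  define a where "a r = column 1 (T r)" for r
  define b where "b r = column 2 (T r)" for r
  define a1 where "a1 r = column 1 (DT 1 r)" for r
  define b1 where "b1 r = column 2 (DT 1 r)" for r
  have da: "(a has_vector_derivative a1 t) (at t within {0..1})" if "t \<in> {0..1}" for t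
    unfolding a_def a1_def by (rule bounded_linear.has_vector_derivative[OF bl_column TD1[OF that]])
  have db: "(b has_vector_derivative b1 t) (at t within {0..1})" if "t \<in> {0..1}" for t
    unfolding b_def b1_def by (rule bounded_linear.has_vector_derivative[OF bl_column TD1[OF that]])
  have da1: "(a1 has_vector_derivative A t *v a t) (at t within {0..1})" if "t \<in> {0..1}" for t
    using bounded_linear.has_vector_derivative[OF bl_column TD2[OF that], of 1]
    unfolding a_def a1_def col_mult .
  have db1: "(b1 has_vector_derivative A t *v b t) (at t within {0..1})" if "t \<in> {0..1}" for t
    using bounded_linear.has_vector_derivative[OF bl_column TD2[OF that], of 2]
    unfolding b_def b1_def col_mult .
  have u_eq: "schatten1 (T r) = UU (a r) (b r)" for r
    by (simp add: schatten1_UU a_def b_def)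
  have ca: "continuous_on {0..1} a" and cb: "continuous_on {0..1} b"
    unfolding continuous_on_eq_continuous_within
    using has_vector_derivative_continuous[OF da] has_vector_derivative_continuous[OF db] by auto
  have cu: "continuous_on {0..1} (\<lambda>s. schatten1 (T s))"
    unfolding u_eq UU_def GG_def by (intro continuous_intros ca cb)
  have conv: "convex_on {0..1} (\<lambda>s. schatten1 (T s))"
  proof (rule convex_from_support)
    show "continuous_on {0..1} (\<lambda>s. schatten1 (T s))" using cu by simp
    fix m :: real assume m: "m \<in> {0<..<1}"
    then have mI: "m \<in> {0..1}" by simp
    obtain q1 q2 where qb: "\<forall>x y. q1 \<bullet> x + q2 \<bullet> y \<le> UU x y" and qe: "q1 \<bullet> a m + q2 \<bullet> b m = UU (a m) (b m)"
      and qp: "0 \<le> q1 \<bullet> (A m *v a m) + q2 \<bullet> (A m *v b m)"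
      using support[OF A_pos[rule_format, OF mI[unfolded]], of "a m" "b m"] by blast
    show "\<exists>l l' l''. (\<forall>r\<in>{0..1}. l r \<le> schatten1 (T r)) \<and> l m = schatten1 (T m)
        \<and> (\<forall>r\<in>{0..1}. (l has_real_derivative l' r) (at r within {0..1}))
        \<and> (l' has_real_derivative l'') (at m within {0..1}) \<and> 0 \<le> l''"
    proof (intro exI conjI ballI)
      show "q1 \<bullet> a r + q2 \<bullet> b r \<le> schatten1 (T r)" for r using qb u_eq by simp
      show "q1 \<bullet> a m + q2 \<bullet> b m = schatten1 (T m)" using qe u_eq by simp
      show "((\<lambda>r. q1 \<bullet> a r + q2 \<bullet> b r) has_real_derivative q1 \<bullet> a1 r + q2 \<bullet> b1 r) (at r within {0..1})"
        if "r \<in> {0..1}" for r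
        using that by (intro DERIV_add vd_qinner da db) auto
      show "((\<lambda>r. q1 \<bullet> a1 r + q2 \<bullet> b1 r) has_real_derivative q1 \<bullet> (A m *v a m) + q2 \<bullet> (A m *v b m)) (at m within {0..1})"
        using mI by (intro DERIV_add vd_qinner da1 db1) auto
      show "0 \<le> q1 \<bullet> (A m *v a m) + q2 \<bullet> (A m *v b m)" by (rule qp)
    qed
  qed
  have strict: "\<exists>e>0. \<exists>u' u''.
            (\<forall>t\<in>ball s e \<inter> {0..1}.
               ((\<lambda>r. schatten1 (T r)) has_real_derivative u' t) (at t within {0..1}))
            \<and> (u' has_real_derivative u'') (at s within {0..1})
            \<and> u'' > 0"
    if sI: "s \<in> {0..1}" and rk: "rank (T s) = 2" and AT: "A s ** T s \<noteq> 0" for s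
  proof -
    have sI': "s \<in> {0..1}" using sI by simp
    have Gs: "0 < GG (a s) (b s)" using rank2_GG[OF rk] by (simp add: a_def b_def)
    have Aab: "A s *v a s \<noteq> 0 \<or> A s *v b s \<noteq> 0"
      using AT zero_cols[of "A s ** T s"] by (auto simp: col_mult a_def b_def)
    obtain q1 q2 where qb: "\<forall>x y. q1 \<bullet> x + q2 \<bullet> y \<le> UU x y" and qe: "q1 \<bullet> a s + q2 \<bullet> b s = UU (a s) (b s)"
      and qp: "0 < q1 \<bullet> (A s *v a s) + q2 \<bullet> (A s *v b s)"
      and qd: "\<forall>x y. q1 \<bullet> x + q2 \<bullet> y = UUd (a s) (b s) x y"
      using strict_support[OF Gs A_pos[rule_format, OF sI]] Aab by blast
    have cG: "continuous (at s within {0..1}) (\<lambda>r. GG (a r) (b r))"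
      unfolding GG_def using ca cb sI' by (intro continuous_intros) (auto simp: continuous_on_eq_continuous_within)
    then have "eventually (\<lambda>r. 0 < GG (a r) (b r)) (at s within {0..1})"
      using Gs by (simp add: continuous_within order_tendstoD(1))
    then obtain e where e: "0 < e" and eG: "\<And>r. r \<in> {0..1} \<Longrightarrow> r \<noteq> s \<Longrightarrow> dist r s < e \<Longrightarrow> 0 < GG (a r) (b r)"
      unfolding eventually_at by auto
    have Gball: "0 < GG (a r) (b r)" if "r \<in> ball s e \<inter> {0..1}" for r
      using that eG[of r] Gs by (cases "r = s") (auto simp: dist_commute)
    define u' where "u' r = UUd (a r) (b r) (a1 r) (b1 r)" for r
    have du: "((\<lambda>r. schatten1 (T r)) has_real_derivative u' t) (at t within {0..1})" if "t \<in> ball s e \<inter> {0..1}" for t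
      unfolding u_eq u'_def using that by (intro UU_deriv da db Gball) auto
    obtain D where dD: "(u' has_real_derivative D) (at s within {0..1})"
      using ED_UUd[OF da[OF sI'] db[OF sI'] da1[OF sI'] db1[OF sI'] Gs] unfolding u'_def by blast
    define l'' where "l'' = q1 \<bullet> (A s *v a s) + q2 \<bullet> (A s *v b s)"
    have "0 \<le> D - l''"
    proof (rule second_test[of s e "\<lambda>r. schatten1 (T r) - (q1 \<bullet> a r + q2 \<bullet> b r)"
          "\<lambda>r. u' r - (q1 \<bullet> a1 r + q2 \<bullet> b1 r)"])
      show "s \<in> {0..1}" by (rule sI)
      show "0 < e" by (rule e)
      show "schatten1 (T s) - (q1 \<bullet> a s + q2 \<bullet> b s) \<le> schatten1 (T r) - (q1 \<bullet> a r + q2 \<bullet> b r)" for r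
        using qb qe u_eq by simp
      show "((\<lambda>r. schatten1 (T r) - (q1 \<bullet> a r + q2 \<bullet> b r)) has_real_derivative u' r - (q1 \<bullet> a1 r + q2 \<bullet> b1 r)) (at r within {0..1})"
        if "r \<in> ball s e \<inter> {0..1}" for r
        using that du[of r] by (intro DERIV_diff DERIV_add vd_qinner da db) auto
      show "u' s - (q1 \<bullet> a1 s + q2 \<bullet> b1 s) = 0" using qd by (simp add: u'_def)
      show "((\<lambda>r. u' r - (q1 \<bullet> a1 r + q2 \<bullet> b1 r)) has_real_derivative D - l'') (at s within {0..1})"
        unfolding l''_def using dD sI' by (intro DERIV_diff DERIV_add vd_qinner da1 db1) auto
    qed
    then have "D > 0" using qp by (simp add: l''_def)
    show ?thesis
      using e du dD \<open>D > 0\<close> by blast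
  qed
  show ?thesis using conv strict by blast
qed

end
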